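(* Let $R$ be a positive random variable such that $e^R$ has infinite upper endpoint and lies in the Gumbel max-domain of attraction with scaling function $e$. Let $\lambda,\beta>0$, let $\gamma_u>0$ with $\gamma_u\to\gamma\in(0,\infty)$, and let $k>d$ be a constant. Then, as $u\to\infty$, $$\int_0^{1-\log(k)/\log u}\mathbb P\big(\lambda e^{R\theta\beta\gamma_u}>u/d\big)f(\theta)\,d\theta=o\!\left(\Big(\frac{e^*(u)}{u\log u}\Big)^{\frac{d-1}{2}}\mathbb P\big(\lambda e^{R\beta\gamma_u}>u\big)\right).$$
   Context: $d\ge2$ is an integer and $f(\theta)=\frac{\Gamma(d/2)}{\sqrt\pi\,\Gamma((d-1)/2)}(1-\theta^2)^{(d-3)/2}$, $\theta\in(-1,1)$. Gumbel max-domain of attraction with scaling function $e$ means $\lim_{t\to\infty}\mathbb P(e^R>t+xe(t))/\mathbb P(e^R>t)=e^{-x}$ for all real $x$. Define $e^*(u)=\beta\gamma_u\,u\,e(w(u))/w(u)$ with $w(u)=(u/\lambda)^{1/(\beta\gamma_u)}$. *)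

theory Defs
  imports "HOL-Probability.Probability" "HOL-Library.Landau_Symbols"
begin

text \<open>Density f of the first coordinate of a uniform point on the unit sphere in R^d.\<close>
definition sphere_density :: "nat \<Rightarrow> real \<Rightarrow> real" where
  "sphere_density d \<theta> =
     Gamma (real d / 2) / (sqrt pi * Gamma ((real d - 1) / 2)) * (1 - \<theta>\<^sup>2) powr ((real d - 3) / 2)"

definition wfun :: "real \<Rightarrow> real \<Rightarrow> (real \<Rightarrow> real) \<Rightarrow> real \<Rightarrow> real" where
  "wfun lam beta gam u = (u / lam) powr (1 / (beta * gam u))"

definition estar :: "real \<Rightarrow> real \<Rightarrow> (real \<Rightarrow> real) \<Rightarrow> (real \<Rightarrow> real) \<Rightarrow> real \<Rightarrow> real" where
  "estar lam beta gam e u = beta * gam u * u * e (wfun lam beta gam u) / wfun lam beta gam u"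

end

theory Submission
  imports Defs
begin


lemma grid_pick:
  fixes y M :: real and m :: nat
  assumes "0 \<le> y" "y \<le> M" "m > 0" "M > 0"
  shows "\<exists>j<m. real j * (M / m) \<le> y \<and> y \<le> (real j + 1) * (M / m)"
proof (cases "y = M")
  case True
  then show ?thesis using assms
    by (intro exI[of _ "m - 1"]) (auto simp: of_nat_diff field_simps)
next
  case False
  define g where "g = M / m"
  have g: "g > 0" using assms by (simp add: g_def)
  define j where "j = nat \<lfloor>y / g\<rfloor>"
  have fl: "real j = of_int \<lfloor>y / g\<rfloor>" using assms g by (simp add: j_def)
  have "y / g < m" using False assms g by (simp add: g_def field_simps)
  then have "j < m" using fl by linarith
  moreover have "real j * g \<le> y" using fl g
    by (metis floor_divide_lower)
  moreover have "y \<le> (real j + 1) * g" using fl g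
    by (smt (verit) floor_divide_upper)
  ultimately show ?thesis unfolding g_def by blast
qed

lemma SN:
  fixes G e :: "real \<Rightarrow> real"
  assumes anti: "\<And>s t. s \<le> t \<Longrightarrow> G t \<le> G s"
    and Gpos: "\<And>t. G t > 0"
    and H: "\<And>x. ((\<lambda>t. G (t + x * e t) / G t) \<longlongrightarrow> exp (-x)) at_top"
    and epos: "eventually (\<lambda>t. e t > 0) at_top"
    and M: "M > 0" and dl: "\<delta> > 0"
  shows "eventually (\<lambda>t. \<forall>y\<in>{0..M}. e (t + y * e t) \<le> (1+\<delta>) * e t) at_top"
proof -
  obtain m :: nat where m: "real m > 2 * M / \<delta>" using reals_Archimedean2 by blast
  have m0: "m > 0" using m M dl by (metis divide_pos_pos mult_pos_pos of_nat_0 order.asym zero_less_numeral neq0_conv)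
  define g where "g = M / m"
  have g0: "g > 0" using m0 M by (simp add: g_def)
  have gd: "g \<le> \<delta>/2" using m m0 M dl by (simp add: g_def field_simps)
  define A where "A = exp (-1 - \<delta>/4)"
  have "exp (-1) > A" using dl by (simp add: A_def)
  from order_tendstoD(1)[OF H[of 1] this]
  have "eventually (\<lambda>s. G (s + e s) / G s > A) at_top" by simp
  then obtain S1 where S1: "\<And>s. s \<ge> S1 \<Longrightarrow> G (s + e s) / G s > A"
    by (auto simp: eventually_at_top_linorder)
  have ej: "\<forall>j\<in>{..<m}. eventually (\<lambda>t. G (t + (real j*g+1+\<delta>) * e t) / G t / (G (t + ((real j+1)*g) * e t) / G t) < A) at_top"
  proof
    fix j assume "j \<in> {..<m}"
    have lim: "((\<lambda>t. G (t + (real j*g+1+\<delta>) * e t) / G t / (G (t + ((real j+1)*g) * e t) / G t))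
       \<longlongrightarrow> exp (-(real j*g+1+\<delta>)) / exp (-((real j+1)*g))) at_top"
      by (intro tendsto_divide H) simp
    have eq: "exp (-(real j*g+1+\<delta>)) / exp (-((real j+1)*g)) = exp (g - 1 - \<delta>)"
      by (simp add: exp_diff[symmetric] algebra_simps)
    have lt: "exp (-(real j*g+1+\<delta>)) / exp (-((real j+1)*g)) < A" unfolding eq A_def using gd dl by simp
    from order_tendstoD(2)[OF lim lt]
    show "eventually (\<lambda>t. G (t + (real j*g+1+\<delta>) * e t) / G t / (G (t + ((real j+1)*g) * e t) / G t) < A) at_top" .
  qed
  have "eventually (\<lambda>t. \<forall>j\<in>{..<m}. G (t + (real j*g+1+\<delta>) * e t) / G t / (G (t + ((real j+1)*g) * e t) / G t) < A) at_top"
    using ej by (subst eventually_ball_finite_distrib) auto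
  moreover have "eventually (\<lambda>t. t \<ge> S1) at_top" by simp
  ultimately show ?thesis using epos
  proof eventually_elim
    case (elim t)
    show ?case
    proof
      fix y assume y: "y \<in> {0..M}"
      show "e (t + y * e t) \<le> (1+\<delta>) * e t"
      proof (rule ccontr)
        assume c: "\<not> ?thesis"
        obtain j where j: "j < m" "real j * g \<le> y" "y \<le> (real j + 1) * g"
          using grid_pick[of y M m] y m0 M unfolding g_def by auto
        define s where "s = t + y * e t"
        have "s \<ge> t" using y elim by (simp add: s_def)
        then have "G (s + e s) / G s > A" using S1 elim by simp
        then have 1: "G (s + e s) > A * G s" using Gpos[of s] by (simp add: field_simps)
        have jy: "(j*g) * e t \<le> y * e t" using j elim by (intro mult_right_mono) auto
        have "s + e s \<ge> t + (real j*g+1+\<delta>) * e t" using c jy unfolding s_def distrib_right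
          by linarith
        then have 2: "G (s + e s) \<le> G (t + (real j*g+1+\<delta>) * e t)" by (rule anti)
        have "G (t + (real j*g+1+\<delta>) * e t) / G t / (G (t + ((real j+1)*g) * e t) / G t) < A"
          using elim(1) j(1) by blast
        then have 3: "G (t + (real j*g+1+\<delta>) * e t) < A * G (t + ((real j+1)*g) * e t)"
          using Gpos[of t] Gpos[of "t + ((real j+1)*g) * e t"] by (simp add: field_simps)
        have "s \<le> t + ((real j+1)*g) * e t" using j elim unfolding s_def
          by (simp add: mult_right_mono)
        then have 4: "G (t + ((real j+1)*g) * e t) \<le> G s" by (rule anti)
        have "A > 0" by (simp add: A_def)
        then have "A * G (t + ((real j+1)*g) * e t) \<le> A * G s" using 4 by (intro mult_left_mono) auto
        then show False using 1 2 3 by linarith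
      qed
    qed
  qed
qed

lemma exp1_gt2: "2 < exp (1::real)"
proof -
  show ?thesis by (metis exp_ln exp_less_cancel_iff ln_2_less_1 zero_less_numeral)
qed

primrec chn :: "(real \<Rightarrow> real) \<Rightarrow> real \<Rightarrow> real \<Rightarrow> nat \<Rightarrow> real" where
  "chn e K t 0 = t"
| "chn e K t (Suc n) = chn e K t n + K * e (chn e K t n)"

lemma e_small:
  fixes G e :: "real \<Rightarrow> real"
  assumes anti: "\<And>s t. s \<le> t \<Longrightarrow> G t \<le> G s"
    and Gpos: "\<And>t. G t > 0"
    and H: "\<And>x. ((\<lambda>t. G (t + x * e t) / G t) \<longlongrightarrow> exp (-x)) at_top"
    and epos: "eventually (\<lambda>t. e t > 0) at_top"
    and eps: "\<epsilon> > 0"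
  shows "eventually (\<lambda>t. e t \<le> \<epsilon> * t) at_top"
proof -
  define \<delta> where "\<delta> = min (\<epsilon>/4) (1/2)"
  have d0: "\<delta> > 0" "\<delta> \<le> 1/2" "4 * \<delta> \<le> \<epsilon>" using eps by (auto simp: \<delta>_def)
  have sn: "eventually (\<lambda>t. \<forall>y\<in>{0..1}. e (t + y * e t) \<le> (1+\<delta>) * e t) at_top"
    using SN[OF anti Gpos H epos, of 1 \<delta>] d0 by auto
  have "exp (-1) < (1/2::real)" using exp1_gt2 by (simp add: exp_minus field_simps)
  from order_tendstoD(2)[OF H[of 1] this]
  have h1: "eventually (\<lambda>t. G (t + e t) / G t < 1/2) at_top" by simp
  have "eventually (\<lambda>t::real. t \<ge> 1) at_top" by (rule eventually_ge_at_top)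
  with sn h1 epos have "eventually (\<lambda>t. t \<ge> 1 \<and> e t > 0 \<and> G (t + e t) / G t < 1/2 \<and>
      (\<forall>y\<in>{0..1}. e (t + y * e t) \<le> (1+\<delta>) * e t)) at_top"
    by eventually_elim auto
  then obtain T0 where T0: "\<And>s. s \<ge> T0 \<Longrightarrow> s \<ge> 1 \<and> e s > 0 \<and> G (s + e s) / G s < 1/2 \<and>
      (\<forall>y\<in>{0..1}. e (s + y * e s) \<le> (1+\<delta>) * e s)"
    by (auto simp: eventually_at_top_linorder)
  define c where "c = chn e 1 T0"
  have cge: "c n \<ge> T0" for n
  proof (induction n)
    case (Suc n)
    then have "e (c n) > 0" using T0 by blast
    then show ?case using Suc by (simp add: c_def)
  qed (simp add: c_def)
  have csuc: "c (Suc n) = c n + e (c n)" for n by (simp add: c_def)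
  have cinc: "c n < c (Suc n)" for n using T0[OF cge[of n]] csuc[of n] by simp
  have cmono: "m \<le> n \<Longrightarrow> c m \<le> c n" for m n
    using lift_Suc_mono_le[of c] cinc less_imp_le by blast
  have Gc: "G (c n) \<le> (1/2)^n * G T0" for n
  proof (induction n)
    case 0 then show ?case by (simp add: c_def)
  next
    case (Suc n)
    have "G (c n + e (c n)) / G (c n) < 1/2" using T0[OF cge[of n]] by blast
    then have "G (c (Suc n)) \<le> 1/2 * G (c n)" using Gpos[of "c n"] csuc[of n]
      by (simp add: field_simps)
    also have "\<dots> \<le> 1/2 * ((1/2)^n * G T0)" using Suc by simp
    finally show ?case by simp
  qed
  have unb: "\<exists>n. c n > t" for t
  proof (rule ccontr)
    assume "\<not> ?thesis"
    then have le: "c n \<le> t" for n by (meson not_less)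
    have "(\<lambda>n. (1/2::real)^n * G T0) \<longlonglongrightarrow> 0 * G T0"
      by (intro tendsto_mult LIMSEQ_power_zero tendsto_const) simp
    from order_tendstoD(2)[OF this, of "G t"] Gpos[of t]
    obtain n where "(1/2::real)^n * G T0 < G t" by (auto simp: eventually_sequentially)
    moreover have "G t \<le> G (c n)" using anti le by blast
    ultimately show False using Gc[of n] by linarith
  qed
  define r where "r n = e (c n) / c n" for n
  have cpos: "c n > 0" for n using T0[OF cge[of n]] by linarith
  have rpos: "r n > 0" for n using T0[OF cge[of n]] cpos[of n] by (simp add: r_def)
  define \<rho> where "\<rho> = (1+\<delta>)/(1+2*\<delta>)"
  have \<rho>: "0 < \<rho>" "\<rho> < 1" using d0 by (auto simp: \<rho>_def)
  define b where "b n = max (2*\<delta>) (\<rho>^n * r 0)" for n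
  have rb: "r n \<le> b n" for n
  proof (induction n)
    case 0 then show ?case by (simp add: b_def)
  next
    case (Suc n)
    have "e (c (Suc n)) = e (c n + 1 * e (c n))" using csuc by simp
    also have "\<dots> \<le> (1+\<delta>) * e (c n)" using T0[OF cge[of n]] by (metis atLeastAtMost_iff mult_1 order_refl zero_le_one)
    finally have "r (Suc n) \<le> (1+\<delta>) * e (c n) / (c n + e (c n))"
      unfolding r_def using csuc[of n] cpos[of "Suc n"] by (simp add: divide_right_mono)
    also have "\<dots> = (1+\<delta>) * r n / (1 + r n)" using cpos[of n] T0[OF cge[of n]] by (simp add: r_def divide_simps)
    also have "\<dots> \<le> (1+\<delta>) * b n / (1 + b n)"
    proof -
      have "0 \<le> r n" using rpos[of n] by simp
      have "\<delta> * r n \<le> \<delta> * b n" using Suc d0 by (intro mult_left_mono) auto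
      then have "(1+\<delta>) * r n * (1 + b n) \<le> (1+\<delta>) * b n * (1 + r n)"
        using Suc by (simp add: algebra_simps)
      then show ?thesis using rpos[of n] Suc by (simp add: field_simps)
    qed
    also have "\<dots> \<le> \<rho> * b n"
    proof -
      have "b n \<ge> 2*\<delta>" by (simp add: b_def)
      then have "(1+\<delta>) * b n * (1 + 2*\<delta>) \<le> (1+\<delta>) * b n * (1 + b n)"
        using d0 by (intro mult_left_mono) auto
      then show ?thesis using d0 \<open>b n \<ge> 2*\<delta>\<close> by (simp add: \<rho>_def field_simps)
    qed
    also have "\<dots> \<le> b (Suc n)"
    proof -
      have 1: "\<rho> * (2*\<delta>) \<le> 2*\<delta>" using \<rho> d0 by (simp add: mult_left_le_one_le)
      have "\<rho> * max (2*\<delta>) (\<rho>^n * r 0) = max (\<rho> * (2*\<delta>)) (\<rho>^Suc n * r 0)"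
        using \<rho> by (simp add: max_mult_distrib_left mult.assoc)
      then show ?thesis using 1 unfolding b_def by simp
    qed
    finally show ?case .
  qed
  have "(\<lambda>n. \<rho>^n * r 0) \<longlonglongrightarrow> 0 * r 0"
    using \<rho> by (intro tendsto_mult LIMSEQ_power_zero tendsto_const) simp
  from order_tendstoD(2)[OF this, of "2*\<delta>"] d0
  obtain N where N: "\<rho>^N * r 0 < 2*\<delta>" by (auto simp: eventually_sequentially)
  have rN: "n \<ge> N \<Longrightarrow> r n \<le> 2*\<delta>" for n
  proof -
    assume "n \<ge> N"
    then have "\<rho>^n \<le> \<rho>^N" using \<rho> by (simp add: power_decreasing)
    then have "\<rho>^n * r 0 \<le> \<rho>^N * r 0" using rpos[of 0] by (simp add: mult_right_mono)
    then show ?thesis using rb[of n] N by (simp add: b_def)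
  qed
  show ?thesis unfolding eventually_at_top_linorder
  proof (intro exI allI impI)
    fix t assume t: "t \<ge> c N"
    define m where "m = (LEAST m. c m > t)"
    have m1: "c m > t" unfolding m_def using unb by (metis LeastI)
    have m2: "\<And>i. i < m \<Longrightarrow> c i \<le> t" unfolding m_def using not_less_Least by force
    have "m \<noteq> 0" using m1 t cmono[of 0 N] by (metis c_def chn.simps(1) leD order.trans le0 \<open>c N \<le> t\<close> m2 cge) 
    then obtain n where n: "m = Suc n" by (cases m) auto
    have cn: "c n \<le> t" using m2 n by simp
    have nN: "n \<ge> N"
    proof (rule ccontr)
      assume "\<not> n \<ge> N"
      then have "m \<le> N" using n by simp
      then have "c m \<le> c N" by (rule cmono)
      then show False using m1 t by simp
    qed
    define y where "y = (t - c n) / e (c n)"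
    have ecn: "e (c n) > 0" using T0[OF cge[of n]] by blast
    have y: "y \<in> {0..1}" using cn m1 n csuc[of n] ecn by (auto simp: y_def field_simps)
    have teq: "t = c n + y * e (c n)" using ecn by (simp add: y_def)
    have "e t \<le> (1+\<delta>) * e (c n)" using T0[OF cge[of n]] y teq by auto
    also have "e (c n) = r n * c n" using cpos[of n] by (simp add: r_def)
    also have "(1+\<delta>) * (r n * c n) \<le> 2 * (2*\<delta> * t)"
    proof -
      have A: "r n * c n \<le> 2*\<delta> * t" using rN[OF nN] cn cpos[of n] rpos[of n] d0
        by (intro mult_mono) auto
      have B: "1 + \<delta> \<le> 2" using d0 by simp
      show ?thesis by (rule mult_mono[OF B A]) (use rpos[of n] cpos[of n] in auto)
    qed
    also have "\<dots> \<le> \<epsilon> * t" using d0 cn cpos[of n] mult_right_mono[of "4*\<delta>" \<epsilon> t] by simp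
    finally show "e t \<le> \<epsilon> * t" .
  qed
qed

lemma pow2_bracket:
  fixes y :: real assumes "y \<ge> 1"
  shows "\<exists>n::nat. 2^n \<le> y \<and> y < 2^(n+1)"
proof -
  obtain k :: nat where k: "y < 2^k" using real_arch_pow[of 2 y] by auto
  define m where "m = (LEAST m::nat. y < 2^m)"
  have m1: "y < 2^m" unfolding m_def using k by (metis LeastI)
  have m2: "\<And>i. i < m \<Longrightarrow> \<not> y < 2^i" unfolding m_def using not_less_Least by blast
  have "m \<noteq> 0" using m1 assms by (metis power_0 not_less)
  then obtain n where n: "m = Suc n" by (cases m) auto
  show ?thesis using m1 m2[of n] n by (intro exI[of _ n]) auto
qed

lemma rapid:
  fixes G e :: "real \<Rightarrow> real"
  assumes anti: "\<And>s t. s \<le> t \<Longrightarrow> G t \<le> G s"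
    and Gpos: "\<And>t. G t > 0"
    and H: "\<And>x. ((\<lambda>t. G (t + x * e t) / G t) \<longlongrightarrow> exp (-x)) at_top"
    and epos: "eventually (\<lambda>t. e t > 0) at_top"
    and rho: "\<rho> > 0"
  shows "eventually (\<lambda>t. G (exp 1 * t) \<le> \<rho> * G t) at_top"
proof -
  obtain K :: nat where K: "exp (- real K) < \<rho>" "K > 0"
  proof -
    have eq: "exp (- real n) = exp (-1) ^ n" for n
      using exp_of_nat_mult[of n "-1::real"] by simp
    have "((\<lambda>n::nat. exp (-1::real) ^ n) \<longlongrightarrow> 0) sequentially"
      by (intro LIMSEQ_power_zero) simp
    then have "((\<lambda>n::nat. exp (- real n)) \<longlongrightarrow> 0) sequentially" unfolding eq .
    from order_tendstoD(2)[OF this rho] obtain N where "\<And>n. n \<ge> N \<Longrightarrow> exp (- real n) < \<rho>"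
      by (auto simp: eventually_sequentially)
    then show ?thesis using that[of "Suc N"] by (meson le_Suc_eq le_refl zero_less_Suc)
  qed
  from order_tendstoD(2)[OF H[of "real K"] K(1)]
  have 1: "eventually (\<lambda>t. G (t + K * e t) / G t < \<rho>) at_top" .
  have 2: "eventually (\<lambda>t. e t \<le> (1 / K) * t) at_top"
    using e_small[OF anti Gpos H epos, of "1/K"] K by simp
  have 3: "eventually (\<lambda>t::real. t \<ge> 0) at_top" by (rule eventually_ge_at_top)
  from 1 2 3 epos show ?thesis
  proof eventually_elim
    case (elim t)
    have "K * e t \<le> t" using elim K by (simp add: field_simps)
    then have "t + K * e t \<le> exp 1 * t" using exp1_gt2 elim(3) mult_right_mono[of 2 "exp 1" t] by linarith
    then have "G (exp 1 * t) \<le> G (t + K * e t)" by (rule anti)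
    also have "\<dots> \<le> \<rho> * G t" using elim(1) Gpos[of t] by (simp add: field_simps)
    finally show ?case .
  qed
qed

lemma L1:
  fixes G e :: "real \<Rightarrow> real"
  assumes anti: "\<And>s t. s \<le> t \<Longrightarrow> G t \<le> G s"
    and Gpos: "\<And>t. G t > 0"
    and H: "\<And>x. ((\<lambda>t. G (t + x * e t) / G t) \<longlongrightarrow> exp (-x)) at_top"
    and epos: "eventually (\<lambda>t. e t > 0) at_top"
    and q: "q > 1" and p: "p > 0" and eps: "\<epsilon> > 0"
  shows "eventually (\<lambda>t. G (q*t) * (t / e t) powr p \<le> \<epsilon> * G t) at_top"
proof -
  define K :: nat where "K = nat \<lceil>p\<rceil> + 1"
  have K: "real K \<ge> p + 1" "K > 0" unfolding K_def using p by linarith+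
  have "exp (- real K) = exp (-1) ^ K" using exp_of_nat_mult[of K "-1::real"] by simp
  also have "\<dots> < (1/2) ^ K"
  proof (rule power_strict_mono)
    show "exp (-1) < (1/2::real)" using exp1_gt2 by (simp add: exp_minus field_simps)
  qed (use K in auto)
  finally have ek: "exp (- real K) < (1/2) ^ K" .
  from order_tendstoD(2)[OF H[of "real K"] ek]
  have h1: "eventually (\<lambda>t. G (t + K * e t) / G t < (1/2) ^ K) at_top" .
  have h2: "eventually (\<lambda>t. \<forall>y\<in>{0..real K}. e (t + y * e t) \<le> (1+1) * e t) at_top"
    using SN[OF anti Gpos H epos, of "real K" 1] K by simp
  define C where "C = (2 * K / (q - 1)) ^ K"
  have C: "C > 0" using q K by (simp add: C_def)
  define \<epsilon>0 where "\<epsilon>0 = min 1 (min ((q-1)/K) (\<epsilon>/C))"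
  have e0: "\<epsilon>0 > 0" "\<epsilon>0 \<le> 1" "\<epsilon>0 \<le> (q-1)/K" "\<epsilon>0 \<le> \<epsilon>/C"
    using q K C eps by (auto simp: \<epsilon>0_def)
  have h3: "eventually (\<lambda>t. e t \<le> \<epsilon>0 * t) at_top"
    using e_small[OF anti Gpos H epos e0(1)] .
  have h4: "eventually (\<lambda>t::real. t > 0) at_top" by (rule eventually_gt_at_top)
  from h1 h2 h3 h4 epos
  have "eventually (\<lambda>s. s > 0 \<and> e s > 0 \<and> G (s + K * e s) / G s < (1/2) ^ K \<and>
     (\<forall>y\<in>{0..real K}. e (s + y * e s) \<le> (1+1) * e s) \<and> e s \<le> \<epsilon>0 * s) at_top"
    by eventually_elim auto
  then obtain T0 where T0: "\<And>s. s \<ge> T0 \<Longrightarrow> s > 0 \<and> e s > 0 \<and> G (s + K * e s) / G s < (1/2) ^ K \<and>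
     (\<forall>y\<in>{0..real K}. e (s + y * e s) \<le> (1+1) * e s) \<and> e s \<le> \<epsilon>0 * s"
    by (auto simp: eventually_at_top_linorder)
  show ?thesis unfolding eventually_at_top_linorder
  proof (intro exI allI impI)
    fix t assume t: "t \<ge> T0"
    note Tt = T0[OF t]
    define cc where "cc = chn e K t"
    have ind: "cc n \<ge> t \<and> e (cc n) \<le> 2^n * e t \<and> cc n \<le> t + K * e t * (2^n - 1) \<and>
       G (cc n) \<le> ((1/2)^K)^n * G t" for n
    proof (induction n)
      case 0 then show ?case by (simp add: cc_def)
    next
      case (Suc n)
      define s where "s = cc n"
      have s: "s \<ge> T0" using Suc t by (simp add: s_def)
      note Ts = T0[OF s]
      have cs: "cc (Suc n) = s + K * e s" by (simp add: cc_def s_def)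
      have "K * e s \<ge> 0" using Ts by simp
      then have 1: "cc (Suc n) \<ge> t" using Suc cs by (simp add: s_def)
      have "e (cc (Suc n)) \<le> 2 * e s" using Ts cs K by auto
      also have "\<dots> \<le> 2 * (2^n * e t)" using Suc by (simp add: s_def)
      finally have 2: "e (cc (Suc n)) \<le> 2^Suc n * e t" by simp
      have "K * e s \<le> K * (2^n * e t)" using Suc by (simp add: s_def mult_left_mono)
      then have 3: "cc (Suc n) \<le> t + K * e t * (2^Suc n - 1)" using Suc cs
        by (simp add: s_def algebra_simps)
      have "G (s + K * e s) < (1/2)^K * G s" using Ts Gpos[of s] by (simp add: pos_divide_less_eq)
      then have "G (cc (Suc n)) \<le> (1/2)^K * G s" by (simp add: cs)
      also have "\<dots> \<le> (1/2)^K * (((1/2)^K)^n * G t)" using Suc by (simp add: s_def mult_left_mono)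
      finally have 4: "G (cc (Suc n)) \<le> ((1/2)^K)^Suc n * G t" by (simp add: mult.assoc)
      show ?case using 1 2 3 4 by blast
    qed
    define x where "x = t / e t"
    have xe: "x * e t = t" using Tt by (simp add: x_def)
    have x0: "x > 0" using Tt by (simp add: x_def)
    have xge: "x \<ge> 1 / \<epsilon>0" using Tt e0 by (simp add: x_def field_simps)
    have "1 \<le> 1 / \<epsilon>0" using e0 by simp
    then have x1: "x \<ge> 1" using xge by linarith
    define y where "y = (q - 1) * x / K"
    have "1 / \<epsilon>0 \<ge> K / (q - 1)" using e0 q K by (simp add: field_simps)
    then have "x \<ge> K / (q - 1)" using xge by linarith
    then have "(q - 1) * x \<ge> K" using q by (simp add: field_simps)
    then have y1: "y \<ge> 1" using K by (simp add: y_def)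
    obtain n where n: "2^n \<le> y" "y < 2^(n+1)" using pow2_bracket[OF y1] by blast
    have i3: "cc n \<le> t + K * e t * (2^n - 1)" using ind[of n] by blast
    have k0: "K * e t \<ge> 0" using Tt by simp
    have "cc n \<le> t + K * e t * 2^n" using i3 k0 by (simp add: right_diff_distrib)
    also have "\<dots> \<le> t + K * e t * y" using n Tt by (simp add: mult_left_mono)
    also have "\<dots> = q * t" using K xe by (simp add: y_def field_simps)
    finally have "G (q * t) \<le> G (cc n)" by (rule anti)
    also have "\<dots> \<le> ((1/2)^K)^n * G t" using ind[of n] by blast
    also have "((1/2::real)^K)^n = (1 / 2^n)^K" by (simp add: power_mult[symmetric] mult.commute power_one_over)
    also have "(1 / 2^n)^K \<le> (2 / y)^K"
    proof (rule power_mono)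
      have "y \<le> 2 * 2^n" using n by simp
      then show "1 / 2^n \<le> 2 / y" using y1 by (simp add: field_simps)
    qed simp
    also have "(2 / y)^K = C / x^K"
    proof -
      have "2 / y = (2 * K / (q - 1)) / x" using q K x0 by (simp add: y_def field_simps)
      then show ?thesis by (simp add: C_def power_divide power_mult_distrib)
    qed
    finally have g1: "G (q * t) \<le> C / x^K * G t" using Gpos[of t] by (simp add: mult_right_mono)
    have "x powr p \<le> x powr (real K - 1)" using x1 K by (intro powr_mono) auto
    also have "\<dots> = x^(K-1)" using x0 K by (simp add: powr_realpow[symmetric] of_nat_diff)
    finally have g2: "x powr p \<le> x^(K-1)" .
    have "G (q * t) * x powr p \<le> C / x^K * G t * x^(K-1)"
      using g1 g2 Gpos[of "q*t"] Gpos[of t] C x0 by (intro mult_mono) auto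
    also have "\<dots> = C / x * G t"
    proof -
      obtain K' where K': "K = Suc K'" using K(2) by (cases K) auto
      show ?thesis using x0 by (simp add: K' field_simps)
    qed
    also have "\<dots> \<le> C * \<epsilon>0 * G t"
    proof -
      have "1 / x \<le> \<epsilon>0" using xge e0 x0 by (simp add: field_simps)
      then have "C * (1 / x) \<le> C * \<epsilon>0" using C by (intro mult_left_mono) auto
      then have "C / x \<le> C * \<epsilon>0" by simp
      then show ?thesis using Gpos[of t] mult_right_mono[of "C / x" "C * \<epsilon>0" "G t"] by simp
    qed
    also have "\<dots> \<le> \<epsilon> * G t"
    proof -
      have "C * \<epsilon>0 \<le> \<epsilon>" using e0 C by (simp add: field_simps)
      then show ?thesis using Gpos[of t] by (intro mult_right_mono) auto
    qed
    finally show "G (q * t) * (t / e t) powr p \<le> \<epsilon> * G t" by (simp add: x_def)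
  qed
qed



lemma int_bound:
  fixes g :: "real \<Rightarrow> real"
  assumes tm: "0 < tm" and V: "V > 0" and A: "A \<ge> 0"
    and gb: "\<And>x. x \<in> {0<..<tm} \<Longrightarrow> 0 \<le> g x \<and> g x \<le> A * exp (- V * (tm - x))"
  shows "\<bar>LBINT x=0..tm. g x\<bar> \<le> A / V"
proof -
  define h where "h x = A * exp (- V * (tm - x))" for x
  define F where "F x = A / V * exp (- V * (tm - x))" for x
  have der: "DERIV F x :> h x" for x
    unfolding F_def h_def using V
    by (auto intro!: derivative_eq_intros simp: field_simps)
  have hb: "has_bochner_integral lborel (\<lambda>x. h x * indicator {0..tm} x) (F tm - F 0)"
    using tm by (intro has_bochner_integral_FTC_Icc_real der) (auto simp: h_def)
  have eq: "(LBINT x=0..tm. g x) = integral\<^sup>L lborel (\<lambda>x. indicator {0<..<tm} x *\<^sub>R g x)"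
  proof -
    have "einterval 0 (ereal tm) = {0<..<tm}"
      using einterval_eq_Icc[of 0 tm] by (simp add: zero_ereal_def)
    then show ?thesis using tm by (simp add: interval_lebesgue_integral_def set_lebesgue_integral_def)
  qed
  have nn: "0 \<le> integral\<^sup>L lborel (\<lambda>x. indicator {0<..<tm} x *\<^sub>R g x)"
    by (intro integral_nonneg_AE AE_I2) (auto simp: indicator_def gb)
  have "integral\<^sup>L lborel (\<lambda>x. indicator {0<..<tm} x *\<^sub>R g x) \<le> A / V"
  proof (rule integral_real_bounded)
    show "0 \<le> A / V" using A V by simp
    have "(\<integral>\<^sup>+x. ennreal (indicator {0<..<tm} x *\<^sub>R g x) \<partial>lborel)
        \<le> (\<integral>\<^sup>+x. ennreal (h x * indicator {0..tm} x) \<partial>lborel)"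
      by (intro nn_integral_mono ennreal_leI) (use A gb in \<open>auto simp: indicator_def h_def\<close>)
    also have "\<dots> = ennreal (integral\<^sup>L lborel (\<lambda>x. h x * indicator {0..tm} x))"
      using hb A by (intro nn_integral_eq_integral) (auto simp: has_bochner_integral_iff indicator_def h_def)
    also have "integral\<^sup>L lborel (\<lambda>x. h x * indicator {0..tm} x) = F tm - F 0"
      using hb by (simp add: has_bochner_integral_iff)
    also have "F tm - F 0 \<le> A / V" using A V by (simp add: F_def)
    finally show "(\<integral>\<^sup>+x. ennreal (indicator {0<..<tm} x *\<^sub>R g x) \<partial>lborel) \<le> ennreal (A / V)"
      by (simp add: ennreal_leI)
  qed
  then show ?thesis using eq nn by simp
qed

lemma two_pow_ge: "real j + 2 \<le> 2 ^ (j + 1)"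
proof (induction j)
  case (Suc j)
  have "real (Suc j) + 2 = (real j + 2) + 1" by simp
  also have "\<dots> \<le> 2^(j+1) + 1" using Suc by simp
  also have "\<dots> \<le> 2^(j+1) + 2^(j+1)" using one_le_power[of "2::real" "j+1"] by simp
  finally show ?case by simp
qed simp

lemma pointwise:
  fixes Q f :: "real \<Rightarrow> real"
  assumes tm: "0 < tm" "tm \<le> 1" and V: "V > 0"
    and Qanti: "\<And>s t. s \<le> t \<Longrightarrow> Q t \<le> Q s" and Qnn: "\<And>s. Q s \<ge> 0"
    and Qdec: "\<And>j::nat. Q (V / tm + j) \<le> \<rho>^j * Q (V / tm)"
    and rho: "0 \<le> \<rho>" "\<rho> * 2 powr Rr \<le> exp (-1)" and Rr: "Rr \<ge> 0" and B: "B \<ge> 0"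
    and fb: "\<And>x j. x \<in> {0<..<tm} \<Longrightarrow> V * (tm - x) < real j + 1 \<Longrightarrow> 0 \<le> f x \<and> f x \<le> B * (real j + 2) powr Rr"
    and x: "x \<in> {0<..<tm}"
  shows "0 \<le> Q (V / x) * f x \<and> Q (V / x) * f x \<le> (B * 2 powr Rr * exp 1 * Q (V / tm)) * exp (- V * (tm - x))"
proof -
  have x0: "0 < x" "x < tm" using x by auto
  define j where "j = nat \<lfloor>V * (tm - x)\<rfloor>"
  have vpos: "V * (tm - x) \<ge> 0" using V x0 by simp
  have j1: "real j \<le> V * (tm - x)" using vpos unfolding j_def by linarith
  have j2: "V * (tm - x) < real j + 1" using vpos unfolding j_def by linarith
  note fj = fb[OF x j2]
  have "V / x - V / tm = V * (tm - x) / (x * tm)" using x0 by (simp add: field_simps)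
  also have "\<dots> \<ge> V * (tm - x)"
  proof -
    have "x * tm \<le> 1" using x0 tm by (smt (verit) mult_le_one)
    then have "V * (tm - x) * (x * tm) \<le> V * (tm - x)" using vpos x0 tm by (simp add: mult_left_le)
    then show ?thesis using x0 tm by (simp add: divide_simps)
  qed
  finally have "V / x \<ge> V / tm + j" using j1 by linarith
  then have Q1: "Q (V / x) \<le> \<rho>^j * Q (V / tm)" using Qanti Qdec order.trans by blast
  have p1: "(real j + 2) powr Rr \<le> 2 powr Rr * (2 powr Rr) ^ j"
  proof -
    have "(real j + 2) powr Rr \<le> (2 ^ (j+1)) powr Rr" using two_pow_ge Rr by (intro powr_mono2) auto
    also have "(2 ^ (j+1) :: real) powr Rr = 2 powr (real (j+1) * Rr)"
    proof -
      have "(2::real)^(j+1) = 2 powr real (j+1)" by (rule powr_realpow[symmetric]) simp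
      then show ?thesis by (simp only: powr_powr)
    qed
    also have "\<dots> = 2 powr Rr * (2 powr Rr) ^ j"
    proof -
      have "(2 powr Rr) ^ j = (2 powr Rr) powr real j" by (rule powr_realpow[symmetric]) simp
      also have "\<dots> = 2 powr (Rr * real j)" by (simp only: powr_powr)
      finally have "2 powr Rr * (2 powr Rr) ^ j = 2 powr (Rr + Rr * real j)" by (simp add: powr_add)
      then show ?thesis by (simp add: algebra_simps)
    qed
    finally show ?thesis .
  qed
  have "\<rho>^j * (real j + 2) powr Rr \<le> \<rho>^j * (2 powr Rr * (2 powr Rr) ^ j)"
    using p1 rho by (intro mult_left_mono) auto
  also have "\<dots> = 2 powr Rr * (\<rho> * 2 powr Rr)^j" by (simp add: power_mult_distrib)
  also have "\<dots> \<le> 2 powr Rr * exp (-1) ^ j" using rho by (intro mult_left_mono power_mono) auto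
  also have "exp (-1::real) ^ j = exp (- real j)" using exp_of_nat_mult[of j "-1::real"] by simp
  also have "exp (- real j) \<le> exp 1 * exp (- V * (tm - x))"
    using j2 by (simp add: exp_add[symmetric])
  finally have P: "\<rho>^j * (real j + 2) powr Rr \<le> 2 powr Rr * (exp 1 * exp (- V * (tm - x)))"
    by (simp add: mult_left_mono)
  have "Q (V / x) * f x \<le> (\<rho>^j * Q (V / tm)) * (B * (real j + 2) powr Rr)"
    using Q1 fj Qnn rho by (intro mult_mono) auto
  also have "\<dots> = (B * Q (V / tm)) * (\<rho>^j * (real j + 2) powr Rr)" by (simp add: algebra_simps)
  also have "\<dots> \<le> (B * Q (V / tm)) * (2 powr Rr * (exp 1 * exp (- V * (tm - x))))"
    using P B Qnn by (intro mult_left_mono) auto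
  also have "\<dots> = (B * 2 powr Rr * exp 1 * Q (V / tm)) * exp (- V * (tm - x))" by (simp add: algebra_simps)
  finally show ?thesis using fj Qnn by simp
qed



lemma set_rw:
  fixes lam cc b z :: real
  assumes "lam > 0" "cc > 0" "b > 0"
  shows "(lam * exp (z * b) > cc) = (exp z > exp (ln (cc / lam) / b))"
proof -
  have "(lam * exp (z * b) > cc) = (exp (z * b) > cc / lam)" using assms by (simp add: field_simps)
  also have "\<dots> = (exp (z * b) > exp (ln (cc / lam)))" using assms by simp
  also have "\<dots> = (z * b > ln (cc / lam))" by simp
  also have "\<dots> = (z > ln (cc / lam) / b)" using assms by (simp add: field_simps)
  also have "\<dots> = (exp z > exp (ln (cc / lam) / b))" by simp
  finally show ?thesis .
qed

theorem mainTheorem6: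
  fixes M :: "'a measure" and R :: "'a \<Rightarrow> real" and e :: "real \<Rightarrow> real"
    and lam beta \<gamma> k :: real and gam :: "real \<Rightarrow> real" and d :: nat
  assumes "prob_space M"
    and "R \<in> borel_measurable M"
    and "\<forall>\<omega>\<in>space M. R \<omega> > 0"
    and "\<forall>t. measure M {\<omega> \<in> space M. exp (R \<omega>) > t} > 0"
    and "\<forall>\<^sub>F t in at_top. e t > 0"
    and "\<forall>x::real. ((\<lambda>t. measure M {\<omega> \<in> space M. exp (R \<omega>) > t + x * e t}
                        / measure M {\<omega> \<in> space M. exp (R \<omega>) > t}) \<longlongrightarrow> exp (- x)) at_top"
    and "d \<ge> 2"
    and "lam > 0" and "beta > 0"
    and "\<forall>u. gam u > 0" and "(gam \<longlongrightarrow> \<gamma>) at_top" and "\<gamma> > 0"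
    and "k > real d"
  shows "(\<lambda>u. LBINT \<theta>=0..(1 - ln k / ln u).
            measure M {\<omega> \<in> space M. lam * exp (R \<omega> * \<theta> * beta * gam u) > u / real d}
            * sphere_density d \<theta>)
         \<in> o[at_top](\<lambda>u. (estar lam beta gam e u / (u * ln u)) powr ((real d - 1) / 2)
            * measure M {\<omega> \<in> space M. lam * exp (R \<omega> * beta * gam u) > u})"
proof -
  interpret P: prob_space M by fact
  note Rm[measurable] = assms(2)
  define G where "G t = measure M {\<omega> \<in> space M. exp (R \<omega>) > t}" for t
  have meas: "{\<omega> \<in> space M. exp (R \<omega>) > t} \<in> sets M" for t by measurable
  have anti: "G t \<le> G s" if "s \<le> t" for s t
    unfolding G_def using that by (intro P.finite_measure_mono meas) auto
  have Gpos: "G t > 0" for t using assms(4) by (simp add: G_def)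
  have Gnn: "G t \<ge> 0" for t using Gpos[of t] by simp
  have H: "((\<lambda>t. G (t + x * e t) / G t) \<longlongrightarrow> exp (-x)) at_top" for x
    using assms(6) by (simp add: G_def)
  note epos = assms(5)
  have d2: "real d \<ge> 2" using assms(7) by simp
  define ai where "ai = beta * \<gamma>"
  have ai: "ai > 0" using assms by (simp add: ai_def)
  define p where "p = (real d - 1) / 2"
  define r where "r = (real d - 3) / 2"
  define Rr where "Rr = max 0 r"
  have p: "p > 0" "p = r + 1" using d2 by (auto simp: p_def r_def field_simps)
  have Rr: "Rr \<ge> 0" by (simp add: Rr_def)
  define \<rho> where "\<rho> = exp (-1) * 2 powr (- Rr)"
  have \<rho>: "\<rho> > 0" "\<rho> * 2 powr Rr \<le> exp (-1)" by (auto simp: \<rho>_def powr_minus field_simps)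
  obtain T0 where T0: "T0 \<ge> 1" "\<And>t. t \<ge> T0 \<Longrightarrow> G (exp 1 * t) \<le> \<rho> * G t"
  proof -
    from rapid[OF anti Gpos H epos \<rho>(1)] obtain T where "\<And>t. t \<ge> T \<Longrightarrow> G (exp 1 * t) \<le> \<rho> * G t"
      by (auto simp: eventually_at_top_linorder)
    then show ?thesis using that[of "max T 1"] by auto
  qed
  have Qdec: "G (exp (s0 + real j)) \<le> \<rho>^j * G (exp s0)" if "exp s0 \<ge> T0" for s0 j
  proof (induction j)
    case (Suc j)
    have "exp (s0 + real j) \<ge> T0" using that by (smt (verit) exp_le_cancel_iff of_nat_0_le_iff)
    then have "G (exp 1 * exp (s0 + real j)) \<le> \<rho> * G (exp (s0 + real j))" by (rule T0(2))
    moreover have "exp 1 * exp (s0 + real j) = exp (s0 + real (Suc j))" by (simp add: exp_add[symmetric])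
    moreover have "\<rho> * G (exp (s0 + real j)) \<le> \<rho> * (\<rho>^j * G (exp s0))"
      using Suc \<rho> by (intro mult_left_mono) auto
    ultimately show ?case by (simp add: mult.assoc)
  qed simp
  define Cd where "Cd = Gamma (real d / 2) / (sqrt pi * Gamma ((real d - 1) / 2))"
  have Cd: "Cd > 0"
  proof -
    have "Gamma (real d / 2) > 0" "Gamma ((real d - 1) / 2) > 0"
      using d2 by (simp_all add: Gamma_real_pos_exp)
    then show ?thesis by (simp add: Cd_def)
  qed
  have sd: "sphere_density d x = Cd * (1 - x\<^sup>2) powr r" for x
    by (simp add: sphere_density_def Cd_def r_def)
  define lk where "lk = ln k"
  have lk: "lk > 0" using assms(13) d2 by (simp add: lk_def)
  define Cf where "Cf = (if d = 2 then Cd * lk powr r else Cd * (2 * (lk + 4 * ai)) powr r)"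
  have Cf: "Cf > 0" using Cd lk ai by (simp add: Cf_def)
  define Kc where "Kc = Cf * 2 powr Rr * exp 1 * (4 * ai)"
  have Kc: "Kc > 0" using Cf ai by (simp add: Kc_def)
  define \<eta> where "\<eta> = ln (k / real d) / (4 * ai)"
  have kd: "ln (k / real d) = lk - ln (real d)" using assms(13) d2 by (simp add: lk_def ln_div)
  have kd0: "lk - ln (real d) > 0" using assms(13) d2 by (simp add: lk_def)
  have \<eta>: "\<eta> > 0" using kd kd0 ai by (simp add: \<eta>_def)
  define q where "q = exp \<eta>"
  have q: "q > 1" using \<eta> by (simp add: q_def)
  have ga: "eventually (\<lambda>u. beta * gam u \<ge> ai / 2 \<and> beta * gam u \<le> 2 * ai) at_top"
  proof -
    have lim: "((\<lambda>u. beta * gam u) \<longlongrightarrow> ai) at_top" unfolding ai_def by (intro tendsto_intros assms(11))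
    have "ai / 2 < ai" "ai < 2 * ai" using ai by auto
    from order_tendstoD(1)[OF lim this(1)] order_tendstoD(2)[OF lim this(2)]
    show ?thesis by eventually_elim auto
  qed
  show ?thesis
  proof (rule landau_o.smallI)
    fix c :: real assume c: "c > 0"
    show "eventually (\<lambda>u. norm (LBINT \<theta>=0..(1 - ln k / ln u).
            measure M {\<omega> \<in> space M. lam * exp (R \<omega> * \<theta> * beta * gam u) > u / real d}
            * sphere_density d \<theta>) \<le> c * norm ((estar lam beta gam e u / (u * ln u)) powr ((real d - 1) / 2)
            * measure M {\<omega> \<in> space M. lam * exp (R \<omega> * beta * gam u) > u})) at_top"
    proof -    define \<epsilon> where "\<epsilon> = c * (ai/2) powr p / Kc"
    have \<epsilon>: "\<epsilon> > 0" using c ai Kc by (simp add: \<epsilon>_def)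
    obtain Tw where Tw: "Tw \<ge> 1" "\<And>t. t \<ge> Tw \<Longrightarrow> e t > 0 \<and> G (q * t) * (t / e t) powr p \<le> \<epsilon> * G t"
    proof -
      have l1: "eventually (\<lambda>t. G (q * t) * (t / e t) powr p \<le> \<epsilon> * G t) at_top"
        by (rule L1[OF anti Gpos H epos q p(1) \<epsilon>])
      from l1 epos
      have "eventually (\<lambda>t. e t > 0 \<and> G (q * t) * (t / e t) powr p \<le> \<epsilon> * G t) at_top"
        by eventually_elim auto
      then obtain T where "\<And>t. t \<ge> T \<Longrightarrow> e t > 0 \<and> G (q * t) * (t / e t) powr p \<le> \<epsilon> * G t"
        by (auto simp: eventually_at_top_linorder)
      then show ?thesis using that[of "max T 1"] by auto
    qed
    define kd where "kd = lk - ln (real d)"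
    have kd0: "kd > 0" using kd0 by (simp add: kd_def)
    define c1 where "c1 = 2 * lk"
    define c2 where "c2 = 2 * \<bar>ln (real d)\<bar> + 2 * \<bar>ln lam\<bar>"
    define c3 where "c3 = 2 * \<bar>ln lam\<bar> * lk / kd"
    define c4 where "c4 = 4 * ai * ln T0"
    define c5 where "c5 = 4 * ai * ln Tw"
    have lnT: "ln T0 \<ge> 0" "ln Tw \<ge> 0" using T0(1) Tw(1) by auto
    have cs: "c1 > 0" "c2 \<ge> 0" "c3 \<ge> 0" "c4 \<ge> 0" "c5 \<ge> 0"
      using lk kd0 ai lnT by (simp_all add: c1_def c2_def c3_def c4_def c5_def)
    define l0 where "l0 = 1 + c1 + c2 + c3 + c4 + c5"
    have ev_u: "eventually (\<lambda>u::real. u \<ge> exp l0) at_top" by (rule eventually_ge_at_top)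
    from ga ev_u show ?thesis
    proof eventually_elim
      case (elim u)
      define a where "a = beta * gam u"
      have a: "ai / 2 \<le> a" "a \<le> 2 * ai" "a > 0" using elim ai by (auto simp: a_def)
      have u0: "u > 0" using elim(2) by (smt (verit) exp_gt_zero)
      define l where "l = ln u"
      have l: "l \<ge> l0" using elim(2) u0 unfolding l_def by (metis ln_exp ln_le_cancel_iff exp_gt_zero)
      have l1: "l \<ge> 1" "l > c1" "l \<ge> c2" "l \<ge> c3" "l \<ge> c4" "l \<ge> c5"
        using l cs unfolding l0_def by linarith+
      have l0': "l > 0" using l1 c1_def c2_def c3_def c4_def c5_def by simp
      define tm where "tm = 1 - ln k / ln u"
      have tm_eq: "tm = 1 - lk / l" by (simp add: tm_def lk_def l_def)
      have lkl: "lk / l < 1/2" "lk / l > 0" using l1 c1_def c2_def c3_def c4_def c5_def lk l0' by (simp_all add: field_simps)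
      have tm: "0 < tm" "tm \<le> 1" "tm < 1" unfolding tm_eq using lkl by linarith+
      have lnV: "ln (u / real d / lam) = l - ln (real d) - ln lam"
        using u0 d2 assms(8) by (simp add: ln_div l_def ln_mult)
      have lnV2: "ln (u / real d / lam) \<ge> l / 2" using lnV l1(3) c2_def abs_ge_self[of "ln (real d)"] abs_ge_self[of "ln lam"] by linarith
      define V where "V = ln (u / real d / lam) / a"
      have V4: "V \<ge> l / (4 * ai)"
      proof -
        have "l / (4 * ai) = (l / 2) / (2 * ai)" by simp
        also have "\<dots> \<le> (l / 2) / a" using a l0' by (intro divide_left_mono) auto
        also have "\<dots> \<le> V" unfolding V_def using lnV2 a by (intro divide_right_mono) auto
        finally show ?thesis .
      qed
      have V0: "V > 0" using V4 l0' ai by (smt (verit) divide_pos_pos)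
      have Vinv: "1 / V \<le> 4 * ai / l"
        using V4 V0 l0' ai by (simp add: field_simps) 
      define L where "L = ln (u / lam) / a"
      have lnL: "ln (u / lam) = l - ln lam" using u0 assms(8) by (simp add: ln_div l_def)
      have L4: "L \<ge> l / (4 * ai)"
      proof -
        have "l / (4 * ai) = (l / 2) / (2 * ai)" by simp
        also have "\<dots> \<le> (l / 2) / a" using a l0' by (intro divide_left_mono) auto
        also have "\<dots> \<le> L" unfolding L_def using lnL l1 c2_def a abs_ge_self[of "ln lam"] abs_ge_zero[of "ln (real d)"] by (intro divide_right_mono) auto
        finally show ?thesis .
      qed
      have vt: "V / tm \<ge> L + \<eta>"
      proof -
        have D: "l - lk > 0" using l1(2) lk c1_def by linarith
        have eq: "V / tm - L = (l * kd - ln lam * lk) / (a * (l - lk))"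
          unfolding V_def L_def tm_eq lnV lnL kd_def using a D l0' by (simp add: field_simps)
        have n1: "2 * (\<bar>ln lam\<bar> * lk) \<le> l * kd" using l1(4) kd0 by (simp add: c3_def field_simps)
        have n2: "ln lam * lk \<le> \<bar>ln lam\<bar> * lk" using lk by (intro mult_right_mono) auto
        have N: "l * kd / 2 \<le> l * kd - ln lam * lk" using n1 n2 by linarith
        have N0: "0 \<le> l * kd / 2" using l0' kd0 by simp
        have Dn: "a * (l - lk) \<le> 2 * ai * l" using a D lk by (intro mult_mono) auto
        have "(l * kd / 2) / (2 * ai * l) \<le> (l * kd - ln lam * lk) / (a * (l - lk))"
        proof (rule frac_le[OF _ N _ Dn])
          show "0 \<le> l * kd - ln lam * lk" using N N0 by linarith
          show "0 < a * (l - lk)" using a D by simp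
        qed
        moreover have "(l * kd / 2) / (2 * ai * l) = \<eta>"
          using l0' ai by (simp add: \<eta>_def kd kd_def field_simps)
        ultimately show ?thesis using eq by linarith
      qed
      have w: "exp L \<ge> Tw"
      proof -
        have "ln Tw \<le> l / (4 * ai)" using l1 c1_def c2_def c3_def c4_def c5_def ai by (simp add: field_simps)
        then have "ln Tw \<le> L" using L4 by linarith
        then show ?thesis using Tw(1) by (metis exp_ln exp_le_cancel_iff less_le_trans zero_less_one)
      qed
      have Tm: "exp (V / tm) \<ge> T0"
      proof -
        have "V \<le> V / tm" using V0 tm by (simp add: field_simps)
        moreover have "ln T0 \<le> l / (4 * ai)" using l1 c1_def c2_def c3_def c4_def c5_def ai by (simp add: field_simps)
        ultimately have "ln T0 \<le> V / tm" using V4 by linarith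
        then show ?thesis using T0(1) by (metis exp_ln exp_le_cancel_iff less_le_trans zero_less_one)
      qed
      have ig: "measure M {\<omega> \<in> space M. lam * exp (R \<omega> * \<theta> * beta * gam u) > u / real d} = G (exp (V / \<theta>))"
        if "\<theta> \<in> {0<..<tm}" for \<theta>
      proof -
        have th0: "\<theta> > 0" using that by simp
        have "(lam * exp (R \<omega> * \<theta> * beta * gam u) > u / real d) = (exp (R \<omega>) > exp (V / \<theta>))" for \<omega>
        proof -
          have e1: "R \<omega> * \<theta> * beta * gam u = R \<omega> * (\<theta> * a)" by (simp add: a_def mult.assoc)
          have e2: "ln (u / real d / lam) / (\<theta> * a) = V / \<theta>" by (simp add: V_def)
          have "(lam * exp (R \<omega> * (\<theta> * a)) > u / real d) = (exp (R \<omega>) > exp (ln (u / real d / lam) / (\<theta> * a)))"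
            by (rule set_rw) (use assms(8) u0 d2 th0 a in auto)
          then show ?thesis unfolding e1 e2 .
        qed
        then show ?thesis by (simp add: G_def)
      qed
      define w where "w = exp L"
      have rs: "measure M {\<omega> \<in> space M. lam * exp (R \<omega> * beta * gam u) > u} = G w"
      proof -
        have "(lam * exp (R \<omega> * beta * gam u) > u) = (exp (R \<omega>) > w)" for \<omega>
        proof -
          have e1: "R \<omega> * beta * gam u = R \<omega> * a" by (simp add: a_def mult.assoc)
          have "(lam * exp (R \<omega> * a) > u) = (exp (R \<omega>) > exp (ln (u / lam) / a))"
            by (rule set_rw) (use assms(8) u0 a in auto)
          then show ?thesis unfolding e1 w_def L_def .
        qed
        then show ?thesis by (simp add: G_def)
      qed
      have fb: "0 \<le> sphere_density d x \<and> sphere_density d x \<le> (Cf * l powr (-r)) * (real j + 2) powr Rr"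
        if x: "x \<in> {0<..<tm}" and j: "V * (tm - x) < real j + 1" for x j
      proof -
        have x01: "0 < x" "x < 1" using x tm by auto
        have sq: "x\<^sup>2 \<le> x" using x01 by (simp add: power2_eq_square mult_left_le_one_le)
        have sq1: "x\<^sup>2 < 1" using sq x01 by simp
        have pos: "1 - x\<^sup>2 > 0" using sq1 by simp
        have nn: "0 \<le> sphere_density d x" using Cd by (simp add: sd)
        have l0p: "l powr (-r) = 1 / l powr r" using l0' by (simp add: powr_minus divide_inverse)
        show ?thesis
        proof (cases "d = 2")
          case True
          then have r: "r = -1/2" "Rr = 0" by (simp_all add: r_def Rr_def)
          have "lk / l \<le> 1 - x\<^sup>2" using sq x01 tm_eq x by simp
          then have "(1 - x\<^sup>2) powr r \<le> (lk / l) powr r" using r lkl by (intro powr_mono2') auto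
          also have "(lk / l) powr r = lk powr r * l powr (-r)"
            using lk l0' l0p by (simp add: powr_divide)
          finally have "sphere_density d x \<le> Cd * (lk powr r * l powr (-r))"
            using Cd by (simp add: sd)
          also have "\<dots> = (Cf * l powr (-r)) * (real j + 2) powr Rr"
            using True r by (simp add: Cf_def)
          finally show ?thesis using nn by simp
        next
          case False
          then have d3: "real d \<ge> 3" using assms(7) by simp
          have r: "r \<ge> 0" "Rr = r" using d3 by (simp_all add: r_def Rr_def)
          have t1: "tm - x < (real j + 1) * (1 / V)" using j V0 by (simp add: field_simps)
          have t2: "(real j + 1) * (1 / V) \<le> (real j + 1) * (4 * ai / l)"
            using Vinv by (intro mult_left_mono) auto
          have t3: "lk / l \<le> lk * (real j + 2) / l" using lk l0' by (simp add: field_simps)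
          have t4: "(real j + 1) * (4 * ai / l) \<le> 4 * ai * (real j + 2) / l" using ai l0' by (simp add: field_simps)
          have "1 - x = lk / l + (tm - x)" using tm_eq by simp
          also have "\<dots> \<le> lk * (real j + 2) / l + 4 * ai * (real j + 2) / l" using t1 t2 t3 t4 by linarith
          also have "\<dots> = (lk + 4 * ai) * (real j + 2) / l" using l0' by (simp add: field_simps)
          finally have omx: "1 - x \<le> (lk + 4 * ai) * (real j + 2) / l" .
          have "1 - x\<^sup>2 = (1 - x) * (1 + x)" by (simp add: power2_eq_square algebra_simps)
          also have "\<dots> \<le> (1 - x) * 2" using x01 by (intro mult_left_mono) auto
          also have "\<dots> \<le> (lk + 4 * ai) * (real j + 2) / l * 2" using mult_right_mono[OF omx, of 2] by simp
          finally have "1 - x\<^sup>2 \<le> (2 * (lk + 4 * ai)) * (real j + 2) / l" by (simp add: algebra_simps)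
          then have "(1 - x\<^sup>2) powr r \<le> ((2 * (lk + 4 * ai)) * (real j + 2) / l) powr r"
            using pos r by (intro powr_mono2) auto
          also have "\<dots> = (2 * (lk + 4 * ai)) powr r * (real j + 2) powr r * l powr (-r)"
            using lk ai l0' l0p by (simp add: powr_divide powr_mult)
          finally have "sphere_density d x \<le> Cd * ((2 * (lk + 4 * ai)) powr r * (real j + 2) powr r * l powr (-r))"
            using Cd by (simp add: sd)
          also have "\<dots> = (Cf * l powr (-r)) * (real j + 2) powr Rr"
            using False r by (simp add: Cf_def)
          finally show ?thesis using nn by simp
        qed
      qed
      define B where "B = Cf * l powr (-r)"
      have B: "B \<ge> 0" using Cf by (simp add: B_def)
      define A where "A = B * 2 powr Rr * exp 1 * G (exp (V / tm))"
      have A: "A \<ge> 0" using B Gnn by (simp add: A_def)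
      have pw: "0 \<le> G (exp (V / x)) * sphere_density d x \<and>
          G (exp (V / x)) * sphere_density d x \<le> A * exp (- V * (tm - x))" if x: "x \<in> {0<..<tm}" for x
        unfolding A_def
      proof (rule pointwise[of tm V "\<lambda>s. G (exp s)" \<rho> Rr B "sphere_density d" x])
        show "G (exp t) \<le> G (exp s)" if "s \<le> t" for s t using that by (intro anti) simp
        show "G (exp (V / tm + real j)) \<le> \<rho> ^ j * G (exp (V / tm))" for j by (rule Qdec[OF Tm])
        show "0 \<le> sphere_density d x \<and> sphere_density d x \<le> B * (real j + 2) powr Rr"
          if "x \<in> {0<..<tm}" "V * (tm - x) < real j + 1" for x j
          using fb[OF that] by (simp add: B_def)
      qed (use tm V0 Gnn \<rho> Rr B x in auto)
      have IB: "\<bar>LBINT \<theta>=0..tm. measure M {\<omega> \<in> space M. lam * exp (R \<omega> * \<theta> * beta * gam u) > u / real d}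
            * sphere_density d \<theta>\<bar> \<le> A / V"
      proof (rule int_bound[OF tm(1) V0 A])
        fix x :: real assume x: "x \<in> {0<..<tm}"
        show "0 \<le> measure M {\<omega> \<in> space M. lam * exp (R \<omega> * x * beta * gam u) > u / real d} * sphere_density d x \<and>
          measure M {\<omega> \<in> space M. lam * exp (R \<omega> * x * beta * gam u) > u / real d} * sphere_density d x
            \<le> A * exp (- V * (tm - x))"
          unfolding ig[OF x] by (rule pw[OF x])
      qed
      have "A / V = A * (1 / V)" by simp
      also have "\<dots> \<le> A * (4 * ai / l)" using A Vinv by (intro mult_left_mono) auto
      also have "\<dots> = Kc * (l powr (-r) / l) * G (exp (V / tm))" by (simp add: A_def B_def Kc_def)
      also have "l powr (-r) / l = l powr (-p)" using l0' p(2) by (simp add: powr_diff powr_minus divide_inverse powr_add)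
      finally have LB: "A / V \<le> Kc * l powr (-p) * G (exp (V / tm))" .
      have "q * exp L = exp (L + \<eta>)" by (simp add: q_def exp_add)
      also have "\<dots> \<le> exp (V / tm)" using vt by simp
      finally have G2: "G (exp (V / tm)) \<le> G (q * exp L)" by (rule anti)
      have L1w: "e (exp L) > 0" "G (q * exp L) * (exp L / e (exp L)) powr p \<le> \<epsilon> * G (exp L)"
        using Tw(2)[OF w] by auto
      define xx where "xx = exp L / e (exp L)"
      have xx: "xx > 0" using L1w by (simp add: xx_def)
      have est: "estar lam beta gam e u / (u * ln u) = a / (xx * l)"
      proof -
        have "wfun lam beta gam u = exp L"
          using u0 assms(8) by (simp add: wfun_def powr_def L_def a_def)
        then show ?thesis using u0 l0' L1w by (simp add: estar_def a_def xx_def l_def field_simps)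
      qed
      have rhs: "(a / (xx * l)) powr p = a powr p / (xx powr p * l powr p)"
        using a xx l0' by (simp add: powr_divide powr_mult)
      have fin1: "Kc * G (q * exp L) * xx powr p \<le> c * a powr p * G (exp L)"
      proof -
        have "Kc * G (q * exp L) * xx powr p = Kc * (G (q * exp L) * xx powr p)" by simp
        also have "\<dots> \<le> Kc * (\<epsilon> * G (exp L))" using L1w Kc by (simp add: xx_def)
        also have "\<dots> = c * (ai / 2) powr p * G (exp L)" using Kc by (simp add: \<epsilon>_def)
        also have "\<dots> \<le> c * a powr p * G (exp L)"
        proof -
          have "(ai / 2) powr p \<le> a powr p" using a ai p by (intro powr_mono2) auto
          then show ?thesis using c Gnn by (intro mult_right_mono mult_left_mono) auto
        qed
        finally show ?thesis .
      qed
      have "Kc * l powr (-p) * G (exp (V / tm)) \<le> Kc * l powr (-p) * G (q * exp L)"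
        using G2 Kc by (intro mult_left_mono) auto
      also have "\<dots> \<le> c * (a powr p / (xx powr p * l powr p)) * G (exp L)"
      proof -
        have lp: "l powr p > 0" "xx powr p > 0" using l0' xx by auto
        have "Kc * l powr (-p) * G (q * exp L) = Kc * G (q * exp L) * xx powr p / (xx powr p * l powr p)"
          using lp by (simp add: powr_minus field_simps)
        also have "\<dots> \<le> c * a powr p * G (exp L) / (xx powr p * l powr p)"
          using fin1 lp by (intro divide_right_mono) auto
        finally show ?thesis by simp
      qed
      finally have main: "\<bar>LBINT \<theta>=0..tm. measure M {\<omega> \<in> space M. lam * exp (R \<omega> * \<theta> * beta * gam u) > u / real d}
            * sphere_density d \<theta>\<bar> \<le> c * ((a / (xx * l)) powr p * G (exp L))"
        using IB LB rhs by simp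
      have rnn: "0 \<le> (a / (xx * l)) powr p * G (exp L)" using Gnn by simp
      show ?case using main rnn unfolding tm_def est rs w_def[symmetric] p_def l_def
        by simp
      
    qed
    qed
  qed
qed


end
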